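(* Let $n\geq 1$ and $r\geq 4$ be integers, and let $S_r=\{0,1,\ldots,2^r-1\}$. Then there is a labeling of every arc of the complete binary tree of depth $n$ by letters of $S_r$ with the following property. Let $u$ and $v$ be any two distinct nodes at a common depth $h$. Let their least common ancestor have depth $h-l$, so $l\geq1$. Let $a_1a_2\ldots a_h$ and $b_1b_2\ldots b_h$ be the letters on the arcs of the root-to-$u$ and root-to-$v$ paths, respectively. Then $$H(a_{h-l+1}a_{h-l+2}\ldots a_h,\;b_{h-l+1}b_{h-l+2}\ldots b_h)\geq\begin{cases} l & \text{if } l\leq r,\\ r & \text{if } r<l\leq 2r,\\ l/2 & \text{if } l>2r.\end{cases}$$ Here $H$ is the Hamming distance, i.e. the number of positions $i$ with $a_i\neq b_i$.
   Context: An "$r$-bit binary tree code of depth $n$" is a complete binary tree of depth $n$ in which every arc is labeled with a letter from the alphabet $S_r=\{0,1,\ldots,2^r-1\}$. The letters can be viewed as $r$-bit vectors. The distance requirement on the labeling is the one stated in the claim. *)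

theory Defs
  imports Complex_Main
begin

(* Nodes of the complete binary tree of depth n are bool lists of length <= n
   (the root is []); the arc entering a nonempty node w is identified with w.
   The letter on the i-th arc (1-based) of the root-to-u path is lab (take i u). *)

definition valid_labeling :: "nat \<Rightarrow> nat \<Rightarrow> (bool list \<Rightarrow> nat) \<Rightarrow> bool" where
  "valid_labeling r n lab \<longleftrightarrow>
     (\<forall>w. w \<noteq> [] \<and> length w \<le> n \<longrightarrow> lab w < 2 ^ r)"

fun lca_depth :: "bool list \<Rightarrow> bool list \<Rightarrow> nat" where
  "lca_depth (x # xs) (y # ys) = (if x = y then Suc (lca_depth xs ys) else 0)"
| "lca_depth _ _ = 0"

definition suffix_hamming ::
  "(bool list \<Rightarrow> nat) \<Rightarrow> bool list \<Rightarrow> bool list \<Rightarrow> nat \<Rightarrow> nat \<Rightarrow> nat" where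
  "suffix_hamming lab u v h l =
     card {i \<in> {h - l + 1 .. h}. lab (take i u) \<noteq> lab (take i v)}"

definition tree_code_bound :: "nat \<Rightarrow> nat \<Rightarrow> real" where
  "tree_code_bound r l =
     (if l \<le> r then real l else if l \<le> 2 * r then real r else real l / 2)"

end

theory Submission
  imports Defs
begin


interpretation X: comm_monoid_set "xor :: nat \<Rightarrow> nat \<Rightarrow> nat" 0
  by unfold_locales

lemma X_bit:
  assumes "finite S"
  shows "bit (X.F f S) b \<longleftrightarrow> odd (card {s\<in>S. bit (f s) b})"
  using assms
proof (induction S rule: finite_induct)
  case empty then show ?case by simp
next
  case (insert x S)
  have "{s \<in> insert x S. bit (f s) b} = (if bit (f x) b then insert x {s\<in>S. bit (f s) b} else {s\<in>S. bit (f s) b})"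
    by auto
  then show ?case using insert by (auto simp: bit_xor_iff)
qed

lemma X_less:
  assumes "finite S" "\<And>s. s \<in> S \<Longrightarrow> f s < 2^r"
  shows "X.F f S < 2^r"
  using assms
proof (induction S rule: finite_induct)
  case empty then show ?case by simp
next
  case (insert x S)
  then have a: "take_bit r (f x) = f x" and b: "take_bit r (X.F f S) = X.F f S"
    by (auto simp: take_bit_nat_eq_self_iff)
  have "take_bit r (xor (f x) (X.F f S)) = xor (f x) (X.F f S)"
    using a b by simp
  then have "xor (f x) (X.F f S) < 2^r" by (metis take_bit_nat_eq_self_iff)
  then show ?case using insert by simp
qed

lemma X_symdiff:
  assumes "finite S" "finite T"
  shows "xor (X.F f S) (X.F f T) = X.F f ((S - T) \<union> (T - S))"
proof -
  have e1: "S = (S - T) \<union> (S \<inter> T)" by blast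
  have e2: "T = (T - S) \<union> (S \<inter> T)" by blast
  have s: "X.F f S = xor (X.F f (S - T)) (X.F f (S \<inter> T))"
  proof -
    have "X.F f S = X.F f ((S - T) \<union> (S \<inter> T))" using e1 by simp
    also have "\<dots> = xor (X.F f (S - T)) (X.F f (S \<inter> T))"
      by (rule X.union_disjoint) (use assms in auto)
    finally show ?thesis .
  qed
  have t: "X.F f T = xor (X.F f (T - S)) (X.F f (S \<inter> T))"
  proof -
    have "X.F f T = X.F f ((T - S) \<union> (S \<inter> T))" using e2 by simp
    also have "\<dots> = xor (X.F f (T - S)) (X.F f (S \<inter> T))"
      by (rule X.union_disjoint) (use assms in auto)
    finally show ?thesis .
  qed
  have u: "X.F f ((S - T) \<union> (T - S)) = xor (X.F f (S - T)) (X.F f (T - S))"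
    by (rule X.union_disjoint) (use assms in auto)
  have k: "xor (xor a c) (xor b c) = xor a b" for a b c :: nat
    by (metis xor.assoc xor.commute xor.left_commute xor_self_eq xor.right_neutral)
  show ?thesis unfolding s t u k ..
qed


lemma xor_eq0_iff: "xor (a::nat) b = 0 \<longleftrightarrow> a = b"
  by (metis xor_self_eq xor.assoc xor.left_neutral xor.commute)

definition Aof :: "nat \<Rightarrow> nat list \<Rightarrow> nat \<Rightarrow> nat" where
  "Aof r cs k = (if k < r then 2^k else if k < length cs then cs ! k else 0)"

definition Dl :: "(nat \<Rightarrow> nat) \<Rightarrow> nat set \<Rightarrow> nat \<Rightarrow> nat" where
  "Dl A E k = X.F (\<lambda>t. A (k - t)) {t\<in>E. t \<le> k}"

definition Zc :: "nat \<Rightarrow> nat list \<Rightarrow> nat set \<Rightarrow> nat \<Rightarrow> nat" where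
  "Zc r cs E l = card {k \<in> {r..<l}. Dl (Aof r cs) E k = 0}"

definition Ls :: "nat \<Rightarrow> nat \<Rightarrow> nat list set" where
  "Ls r n = {xs. set xs \<subseteq> {..<2^r} \<and> length xs = n}"

lemma Aof_less: "set cs \<subseteq> {..<2^r} \<Longrightarrow> Aof r cs k < 2^r"
  unfolding Aof_def by (auto simp: subset_iff)

lemma Dl_less: "(\<And>j. A j < 2^r) \<Longrightarrow> Dl A E k < 2^r"
  unfolding Dl_def by (rule X_less) auto

lemma Aof_snoc: "k < length cs \<Longrightarrow> Aof r (cs@[x]) k = Aof r cs k"
  unfolding Aof_def by (auto simp: nth_append)

lemma Aof_snoc_last: "r \<le> length cs \<Longrightarrow> Aof r (cs@[x]) (length cs) = x"
  unfolding Aof_def by auto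

lemma Dl_cong: "(\<And>j. j \<le> k \<Longrightarrow> A j = B j) \<Longrightarrow> Dl A E k = Dl B E k"
  unfolding Dl_def by (rule X.cong) auto

lemma Zc_snoc_le: "l \<le> length cs \<Longrightarrow> Zc r (cs@[x]) E l = Zc r cs E l"
proof -
  assume l: "l \<le> length cs"
  have "Dl (Aof r (cs@[x])) E k = Dl (Aof r cs) E k" if "k < l" for k
    by (rule Dl_cong) (use that l in \<open>auto simp: Aof_snoc\<close>)
  then show ?thesis unfolding Zc_def
    by (intro arg_cong[where f=card]) auto
qed

lemma Dl_split:
  assumes "0 \<in> E"
  shows "Dl A E k = xor (A k) (X.F (\<lambda>t. A (k - t)) {t\<in>E. 1 \<le> t \<and> t \<le> k})"
proof -
  have "{t\<in>E. t \<le> k} = insert 0 {t\<in>E. 1 \<le> t \<and> t \<le> k}" using assms by auto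
  then show ?thesis unfolding Dl_def by (simp add: X.insert)
qed


lemma Zc_snoc_last:
  assumes r: "r \<le> length cs" and E: "0 \<in> E"
  shows "Zc r (cs@[x]) E (Suc (length cs)) = Zc r cs E (length cs) +
     (if x = X.F (\<lambda>t. Aof r cs (length cs - t)) {t\<in>E. 1 \<le> t \<and> t \<le> length cs} then 1 else 0)"
proof -
  let ?m = "length cs"
  let ?C = "X.F (\<lambda>t. Aof r cs (?m - t)) {t\<in>E. 1 \<le> t \<and> t \<le> ?m}"
  have eqk: "Dl (Aof r (cs@[x])) E k = Dl (Aof r cs) E k" if "k < ?m" for k
    by (rule Dl_cong) (use that in \<open>auto simp: Aof_snoc\<close>)
  have C: "X.F (\<lambda>t. Aof r (cs@[x]) (?m - t)) {t\<in>E. 1 \<le> t \<and> t \<le> ?m} = ?C"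
    by (rule X.cong) (auto simp: Aof_snoc)
  have last: "Dl (Aof r (cs@[x])) E ?m = 0 \<longleftrightarrow> x = ?C"
    using Dl_split[OF E, of "Aof r (cs@[x])" ?m] C Aof_snoc_last[OF r] by (simp add: xor_eq0_iff)
  have split: "{k \<in> {r..<Suc ?m}. Dl (Aof r (cs@[x])) E k = 0} =
     {k \<in> {r..<?m}. Dl (Aof r cs) E k = 0} \<union> (if x = ?C then {?m} else {})"
    using eqk last r by (auto simp: less_Suc_eq)
  show ?thesis unfolding Zc_def split
    by (subst card_Un_disjoint) auto
qed

lemma Ls_snoc: "Ls r (Suc n) = (\<lambda>(xs,x). xs@[x]) ` (Ls r n \<times> {..<2^r})"
proof
  show "Ls r (Suc n) \<subseteq> (\<lambda>(xs,x). xs@[x]) ` (Ls r n \<times> {..<2^r})"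
  proof
    fix ys assume "ys \<in> Ls r (Suc n)"
    then have ne: "ys \<noteq> []" and st: "set ys \<subseteq> {..<2^r}" and len: "length ys = Suc n"
      unfolding Ls_def by auto
    have "ys = butlast ys @ [last ys]" using ne by simp
    moreover have "butlast ys \<in> Ls r n" unfolding Ls_def
      using st len by (auto dest: in_set_butlastD)
    moreover have "last ys \<in> {..<2^r}" using st last_in_set[OF ne] by blast
    ultimately show "ys \<in> (\<lambda>(xs,x). xs@[x]) ` (Ls r n \<times> {..<2^r})"
      by (metis (no_types, lifting) SigmaI case_prod_conv image_eqI)
  qed
qed (auto simp: Ls_def)

lemma Ls_snoc_inj: "inj_on (\<lambda>(xs,x). xs@[x]) A"
  by (auto simp: inj_on_def)

lemma finite_Ls: "finite (Ls r n)"
  unfolding Ls_def by (rule finite_lists_length_eq) auto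

lemma card_Ls: "card (Ls r n) = (2^r)^n"
  unfolding Ls_def by (subst card_lists_length_eq) auto


lemma sum_if_one:
  assumes "C < (N::nat)"
  shows "(\<Sum>x<N. (if x = C then (tt::real) else 1)) = real N - 1 + tt"
proof -
  have "(\<Sum>x<N. (if x = C then tt else 1)) = (\<Sum>x<N. 1 + (if x = C then tt - 1 else 0))"
    by (rule sum.cong) auto
  also have "\<dots> = real N + (tt - 1)"
    using assms by (simp add: sum.distrib)
  finally show ?thesis by simp
qed

lemma sum_Ls_snoc:
  "(\<Sum>ys\<in>Ls r (Suc n). f ys) = (\<Sum>cs\<in>Ls r n. \<Sum>x<2^r. f (cs@[x]))"
proof -
  have "(\<Sum>ys\<in>Ls r (Suc n). f ys) = (\<Sum>p\<in>Ls r n \<times> {..<2^r}. f ((\<lambda>(xs,x). xs@[x]) p))"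
    unfolding Ls_snoc by (simp add: sum.reindex[OF Ls_snoc_inj] comp_def)
  also have "\<dots> = (\<Sum>cs\<in>Ls r n. \<Sum>x<2^r. f (cs@[x]))"
    by (simp add: sum.cartesian_product case_prod_unfold)
  finally show ?thesis .
qed

lemma Zc_sum:
  assumes E: "0 \<in> E"
  shows "r \<le> l \<Longrightarrow> l \<le> n \<Longrightarrow>
    (\<Sum>cs\<in>Ls r n. (tt::real)^(Zc r cs E l)) = (2^r)^(n-l) * (2^r)^r * (2^r - 1 + tt)^(l-r)"
proof (induction n arbitrary: l)
  case 0
  then have "l = 0" "r = 0" by auto
  then show ?case by (simp add: Zc_def card_Ls)
next
  case (Suc n)
  let ?q = "(2::nat)^r"
  have lenL: "length cs = n" "set cs \<subseteq> {..<?q}" if "cs \<in> Ls r n" for cs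
    using that unfolding Ls_def by auto
  show ?case
  proof (cases "l \<le> n")
    case True
    have "(\<Sum>cs\<in>Ls r (Suc n). tt^(Zc r cs E l)) = (\<Sum>cs\<in>Ls r n. \<Sum>x<?q. tt^(Zc r (cs@[x]) E l))"
      by (rule sum_Ls_snoc)
    also have "\<dots> = (\<Sum>cs\<in>Ls r n. real ?q * tt^(Zc r cs E l))"
      by (rule sum.cong) (use lenL True in \<open>auto simp: Zc_snoc_le\<close>)
    also have "\<dots> = real ?q * (\<Sum>cs\<in>Ls r n. tt^(Zc r cs E l))"
      by (simp add: sum_distrib_left)
    also have "\<dots> = (2^r)^(Suc n-l) * (2^r)^r * (2^r - 1 + tt)^(l-r)"
      using Suc.IH[OF Suc.prems(1) True] True by (simp add: Suc_diff_le)
    finally show ?thesis .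
  next
    case False
    then have l: "l = Suc n" using Suc.prems by simp
    show ?thesis
    proof (cases "r = Suc n")
      case True
      have "Zc r cs E l = 0" for cs unfolding Zc_def using l True by simp
      then show ?thesis using l True by (simp add: card_Ls)
    next
      case False
      then have rn: "r \<le> n" using Suc.prems l by simp
      have "(\<Sum>cs\<in>Ls r (Suc n). tt^(Zc r cs E l)) = (\<Sum>cs\<in>Ls r n. \<Sum>x<?q. tt^(Zc r (cs@[x]) E l))"
        by (rule sum_Ls_snoc)
      also have "\<dots> = (\<Sum>cs\<in>Ls r n. (real ?q - 1 + tt) * tt^(Zc r cs E n))"
      proof (rule sum.cong[OF refl])
        fix cs assume cs: "cs \<in> Ls r n"
        let ?C = "X.F (\<lambda>t. Aof r cs (length cs - t)) {t\<in>E. 1 \<le> t \<and> t \<le> length cs}"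
        have Cq: "?C < ?q"
          by (rule X_less) (use Aof_less lenL(2)[OF cs] in auto)
        have "(\<Sum>x<?q. tt^(Zc r (cs@[x]) E l)) = (\<Sum>x<?q. tt^(Zc r cs E n) * (if x = ?C then tt else 1))"
          by (rule sum.cong) (use Zc_snoc_last[OF _ E, of r cs] lenL[OF cs] rn l in \<open>auto simp: power_add\<close>)
        also have "\<dots> = tt^(Zc r cs E n) * (\<Sum>x<?q. if x = ?C then tt else 1)"
          by (rule sum_distrib_left[symmetric])
        also have "\<dots> = tt^(Zc r cs E n) * (real ?q - 1 + tt)"
          by (simp only: sum_if_one[OF Cq])
        finally show "(\<Sum>x<?q. tt^(Zc r (cs@[x]) E l)) = (real ?q - 1 + tt) * tt^(Zc r cs E n)"
          by simp
      qed
      also have "\<dots> = (real ?q - 1 + tt) * (\<Sum>cs\<in>Ls r n. tt^(Zc r cs E n))"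
        by (simp add: sum_distrib_left)
      also have "\<dots> = (2^r)^(Suc n-l) * (2^r)^r * (2^r - 1 + tt)^(l-r)"
        using Suc.IH[OF rn le_refl] l rn by (simp add: Suc_diff_le)
      finally show ?thesis .
    qed
  qed
qed


lemma window_nz:
  assumes E: "0 \<in> E" and k: "k < r"
  shows "Dl (Aof r cs) E k \<noteq> 0"
proof -
  have fin: "finite {t\<in>E. t \<le> k}" by simp
  have "{s \<in> {t\<in>E. t \<le> k}. bit (Aof r cs (k - s)) k} = {0}"
    using E k by (auto simp: Aof_def bit_exp_iff)
  then have "bit (Dl (Aof r cs) E k) k"
    unfolding Dl_def by (simp add: X_bit[OF fin])
  then show ?thesis by (cases "Dl (Aof r cs) E k") auto
qed

lemma count_nz:
  assumes E: "0 \<in> E"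
  shows "min l r \<le> card {k\<in>{..<l}. Dl (Aof r cs) E k \<noteq> 0}"
    and "r \<le> l \<Longrightarrow> card {k\<in>{..<l}. Dl (Aof r cs) E k \<noteq> 0} + Zc r cs E l = l"
proof -
  have "{..<min l r} \<subseteq> {k\<in>{..<l}. Dl (Aof r cs) E k \<noteq> 0}"
    using window_nz[OF E] by auto
  from card_mono[OF _ this] show "min l r \<le> card {k\<in>{..<l}. Dl (Aof r cs) E k \<noteq> 0}" by simp
next
  assume rl: "r \<le> l"
  let ?N = "{k\<in>{r..<l}. Dl (Aof r cs) E k \<noteq> 0}"
  let ?Z = "{k\<in>{r..<l}. Dl (Aof r cs) E k = 0}"
  have s1: "{k\<in>{..<l}. Dl (Aof r cs) E k \<noteq> 0} = {..<r} \<union> ?N"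
    using window_nz[OF E] rl by auto
  have c1: "card ({..<r} \<union> ?N) = r + card ?N"
    by (subst card_Un_disjoint) auto
  have s2: "{r..<l} = ?N \<union> ?Z" by auto
  have c2: "card ?N + card ?Z = l - r"
    using card_Un_disjoint[of ?N ?Z] s2 by (metis (no_types, lifting) card_atLeastLessThan disjoint_iff finite_atLeastLessThan finite_subset mem_Collect_eq subsetI Un_upper1 Un_upper2)
  show "card {k\<in>{..<l}. Dl (Aof r cs) E k \<noteq> 0} + Zc r cs E l = l"
    unfolding s1 c1 Zc_def using c2 rl by simp
qed

lemma bad_sum:
  assumes E: "0 \<in> E" and "r \<le> l" "l \<le> n"
  shows "(\<Sum>cs\<in>Ls r n. if l < 2 * Zc r cs E l then 1 else 0::real)
     \<le> (2^r)^(n-l) * (2^r)^r * (2^r + 15)^(l-r) / 4^(l+1)"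
proof -
  have "(\<Sum>cs\<in>Ls r n. if l < 2 * Zc r cs E l then 1 else 0::real)
      \<le> (\<Sum>cs\<in>Ls r n. 16^(Zc r cs E l) / 4^(l+1))"
  proof (rule sum_mono)
    fix cs
    show "(if l < 2 * Zc r cs E l then 1 else 0::real) \<le> 16^(Zc r cs E l) / 4^(l+1)"
    proof (cases "l < 2 * Zc r cs E l")
      case True
      have "(4::real)^(l+1) \<le> 4^(2 * Zc r cs E l)"
        by (rule power_increasing) (use True in auto)
      also have "\<dots> = 16^(Zc r cs E l)" by (simp add: power_mult)
      finally show ?thesis using True by simp
    qed simp
  qed
  also have "\<dots> = (\<Sum>cs\<in>Ls r n. 16^(Zc r cs E l)) / 4^(l+1)"
    by (simp add: sum_divide_distrib)
  also have "\<dots> = (2^r)^(n-l) * (2^r)^r * (2^r - 1 + 16)^(l-r) / 4^(l+1)"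
    using Zc_sum[OF E assms(2,3), of 16] by simp
  finally show ?thesis by (simp add: add.commute)
qed


lemma term_bound:
  fixes Q :: real
  assumes Q: "16 \<le> Q" and rl: "r \<le> l" and ln: "l \<le> n"
  shows "2^l * (Q^(n-l) * Q^r * (Q+15)^(l-r) / 4^(l+1)) \<le> Q^n * (1/2)^(r+2) * (31/32)^(l-r)"
proof -
  obtain j where j: "l = r + j" using rl le_Suc_ex by blast
  obtain s where s: "n = l + s" using ln le_Suc_ex by blast
  define c where "c = Q^s * Q^r * (1/2)^r / 4"
  have c0: "0 \<le> c" unfolding c_def using Q by simp
  have key: "((Q+15)/2)^j \<le> (31*Q/32)^j"
    by (rule power_mono) (use Q in auto)
  have e4m: "(4::real)^m = 2^m * 2^m" for m
    by (simp flip: power_mult_distrib)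
  have e4: "(4::real)^(r+j+1) = 2^(r+j) * 2^(r+j) * 4"
    by (simp only: power_Suc2 e4m[of "r+j"] Suc_eq_plus1[symmetric])
  have L: "2^l * (Q^(n-l) * Q^r * (Q+15)^(l-r) / 4^(l+1)) = c * ((Q+15)/2)^j"
    unfolding c_def j s using e4 by (simp add: power_add power_divide field_simps)
  have R: "Q^n * (1/2)^(r+2) * (31/32)^(l-r) = c * (31*Q/32)^j"
    unfolding c_def j s by (simp add: power_add power_divide power_mult_distrib field_simps)
  show ?thesis unfolding L R using key c0 by (rule mult_left_mono)
qed

lemma geo_bound:
  shows "(\<Sum>l\<in>{2*r+1..n}. (31/32::real)^(l-r)) \<le> 32"
proof -
  have inj: "inj_on (\<lambda>l. l - r) {2*r+1..n}" by (auto simp: inj_on_def)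
  have "(\<Sum>l\<in>{2*r+1..n}. (31/32::real)^(l-r)) = (\<Sum>j\<in>(\<lambda>l. l - r) ` {2*r+1..n}. (31/32::real)^j)"
    by (subst sum.reindex[OF inj]) (simp add: comp_def)
  also have "\<dots> \<le> (\<Sum>j<Suc n. (31/32::real)^j)"
    by (rule sum_mono2) auto
  also have "\<dots> = (1 - (31/32)^Suc n) / (1 - 31/32)"
    by (subst sum_gp_strict) simp
  also have "\<dots> \<le> 32" by simp
  finally show ?thesis .
qed


lemma exists_cs:
  assumes r4: "4 \<le> r"
  shows "\<exists>cs\<in>Ls r n. \<forall>l\<in>{2*r+1..n}. \<forall>E. E \<subseteq> {..<l} \<and> 0 \<in> E \<longrightarrow> \<not> (l < 2 * Zc r cs E l)"
proof (rule ccontr)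
  assume H: "\<not> ?thesis"
  define Pat where "Pat l = {E. E \<subseteq> {..<l} \<and> 0 \<in> E}" for l :: nat
  define ind where "ind cs l E = (if l < 2 * Zc r cs E l then 1 else 0::real)" for cs l E
  define Q where "Q = (2::real)^r"
  have finP: "finite (Pat l)" for l
    unfolding Pat_def by (rule finite_subset[of _ "Pow {..<l}"]) auto
  have cardP: "real (card (Pat l)) \<le> 2^l" for l
  proof -
    have "card (Pat l) \<le> card (Pow {..<l})"
      unfolding Pat_def by (rule card_mono) auto
    then show ?thesis by (simp add: card_Pow)
  qed
  have ind0: "0 \<le> ind cs l E" for cs l E unfolding ind_def by simp
  have one: "1 \<le> (\<Sum>l\<in>{2*r+1..n}. \<Sum>E\<in>Pat l. ind cs l E)" if cs: "cs \<in> Ls r n" for cs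
  proof -
    from H cs obtain l E where l: "l \<in> {2*r+1..n}" and E: "E \<subseteq> {..<l}" "0 \<in> E"
      and bad: "l < 2 * Zc r cs E l" by blast
    have "1 = ind cs l E" using bad unfolding ind_def by simp
    also have "\<dots> \<le> (\<Sum>E\<in>Pat l. ind cs l E)"
      by (rule member_le_sum) (use E finP ind0 in \<open>auto simp: Pat_def\<close>)
    also have "\<dots> \<le> (\<Sum>l\<in>{2*r+1..n}. \<Sum>E\<in>Pat l. ind cs l E)"
      by (rule member_le_sum[where f="\<lambda>l. \<Sum>E\<in>Pat l. ind cs l E"]) (use l ind0 in \<open>auto intro: sum_nonneg\<close>)
    finally show ?thesis .
  qed
  have "real (card (Ls r n)) = (\<Sum>cs\<in>Ls r n. 1)" by simp
  also have "\<dots> \<le> (\<Sum>cs\<in>Ls r n. \<Sum>l\<in>{2*r+1..n}. \<Sum>E\<in>Pat l. ind cs l E)"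
    by (rule sum_mono) (rule one)
  also have "\<dots> = (\<Sum>l\<in>{2*r+1..n}. \<Sum>E\<in>Pat l. \<Sum>cs\<in>Ls r n. ind cs l E)"
    by (subst sum.swap) (simp add: sum.swap[of _ _ "Ls r n"])
  also have "\<dots> \<le> (\<Sum>l\<in>{2*r+1..n}. \<Sum>E\<in>Pat l. Q^(n-l) * Q^r * (Q + 15)^(l-r) / 4^(l+1))"
  proof (rule sum_mono, rule sum_mono)
    fix l E assume l: "l \<in> {2*r+1..n}" and E: "E \<in> Pat l"
    show "(\<Sum>cs\<in>Ls r n. ind cs l E) \<le> Q^(n-l) * Q^r * (Q + 15)^(l-r) / 4^(l+1)"
      unfolding ind_def Q_def by (rule bad_sum) (use l E in \<open>auto simp: Pat_def\<close>)
  qed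
  also have "\<dots> = (\<Sum>l\<in>{2*r+1..n}. real (card (Pat l)) * (Q^(n-l) * Q^r * (Q + 15)^(l-r) / 4^(l+1)))"
    by simp
  also have "\<dots> \<le> (\<Sum>l\<in>{2*r+1..n}. 2^l * (Q^(n-l) * Q^r * (Q + 15)^(l-r) / 4^(l+1)))"
    by (rule sum_mono, rule mult_right_mono) (use cardP Q_def in auto)
  also have "\<dots> \<le> (\<Sum>l\<in>{2*r+1..n}. Q^n * (1/2)^(r+2) * (31/32)^(l-r))"
  proof (rule sum_mono)
    fix l assume l: "l \<in> {2*r+1..n}"
    have "(16::real) \<le> 2^r" using power_increasing[OF r4, of "2::real"] by simp
    then show "2^l * (Q^(n-l) * Q^r * (Q + 15)^(l-r) / 4^(l+1)) \<le> Q^n * (1/2)^(r+2) * (31/32)^(l-r)"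
      unfolding Q_def by (rule term_bound) (use l in auto)
  qed
  also have "\<dots> = Q^n * (1/2)^(r+2) * (\<Sum>l\<in>{2*r+1..n}. (31/32)^(l-r))"
    by (simp add: sum_distrib_left)
  also have "\<dots> \<le> Q^n * (1/2)^(r+2) * 32"
    by (rule mult_left_mono[OF geo_bound]) (use Q_def in auto)
  also have "\<dots> \<le> Q^n * (1/2)"
  proof -
    have "(1/2::real)^r \<le> (1/2)^4" by (rule power_decreasing) (use r4 in auto)
    moreover have "(1/2::real)^(r+2) * 32 = (1/2)^r * 8" by (simp add: power_add)
    moreover have "(1/2::real)^4 = 1/16" by (simp add: power_divide)
    ultimately have "(1/2::real)^(r+2) * 32 \<le> 1/2" by linarith
    then show ?thesis using Q_def by (simp add: mult.assoc)
  qed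
  also have "\<dots> < real (card (Ls r n))"
    unfolding card_Ls Q_def by simp
  finally show False by simp
qed




lemma lca_props:
  "length u = length v \<Longrightarrow> u \<noteq> v \<Longrightarrow> lca_depth u v < length u \<and>
     (\<forall>j<lca_depth u v. u!j = v!j) \<and> u!(lca_depth u v) \<noteq> v!(lca_depth u v)"
proof (induction u v rule: lca_depth.induct)
  case (1 x xs y ys)
  show ?case
  proof (cases "x = y")
    case True
    then have "xs \<noteq> ys" "length xs = length ys" using 1 by auto
    then have IH: "lca_depth xs ys < length xs \<and>
     (\<forall>j<lca_depth xs ys. xs!j = ys!j) \<and> xs!(lca_depth xs ys) \<noteq> ys!(lca_depth xs ys)"
      using 1 True by blast
    have "\<forall>j<Suc (lca_depth xs ys). (x#xs)!j = (y#ys)!j"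
      using IH True by (auto simp: less_Suc_eq_0_disj)
    then show ?thesis using IH True by simp
  next
    case False then show ?thesis by simp
  qed
qed simp_all

definition labA :: "(nat \<Rightarrow> nat) \<Rightarrow> bool list \<Rightarrow> nat" where
  "labA A w = X.F (\<lambda>j. A (length w - 1 - j)) {j. j < length w \<and> w!j}"

lemma labA_take: "i \<le> length u \<Longrightarrow> labA A (take i u) = X.F (\<lambda>j. A (i - 1 - j)) {j. j < i \<and> u!j}"
  unfolding labA_def by (intro X.cong) auto

lemma labA_xor:
  assumes "i \<le> length u" "i \<le> length v"
  shows "xor (labA A (take i u)) (labA A (take i v)) = X.F (\<lambda>j. A (i - 1 - j)) {j. j < i \<and> u!j \<noteq> v!j}"
proof -
  have e: "({j. j < i \<and> u!j} - {j. j < i \<and> v!j}) \<union> ({j. j < i \<and> v!j} - {j. j < i \<and> u!j}) = {j. j < i \<and> u!j \<noteq> v!j}"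
    by auto
  show ?thesis unfolding labA_take[OF assms(1)] labA_take[OF assms(2)]
    by (subst X_symdiff) (auto simp: e)
qed

lemma labA_diff:
  assumes len: "length u = h" "length v = h" and c: "c < i" "i \<le> h"
    and agree: "\<forall>j<c. u!j = v!j"
  shows "labA A (take i u) \<noteq> labA A (take i v) \<longleftrightarrow>
    Dl A {t. t < h - c \<and> u!(c+t) \<noteq> v!(c+t)} (i - 1 - c) \<noteq> 0"
proof -
  let ?E = "{t. t < h - c \<and> u!(c+t) \<noteq> v!(c+t)}"
  have S: "{j. j < i \<and> u!j \<noteq> v!j} = (\<lambda>t. c + t) ` {t\<in>?E. t \<le> i - 1 - c}"
  proof (rule set_eqI, rule iffI)
    fix j assume j: "j \<in> {j. j < i \<and> u!j \<noteq> v!j}"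
    then have j1: "j < i" and j2: "u!j \<noteq> v!j" by auto
    have cj: "c \<le> j"
    proof (rule ccontr)
      assume "\<not> c \<le> j"
      then have "j < c" by simp
      then show False using agree j2 by blast
    qed
    have jj: "j = c + (j - c)" using cj by simp
    have "j - c < h - c" using j1 c cj by linarith
    moreover have "j - c \<le> i - 1 - c" using j1 cj by linarith
    moreover have "u!(c + (j - c)) \<noteq> v!(c + (j - c))" using jj j2 by simp
    ultimately have "j - c \<in> {t\<in>?E. t \<le> i - 1 - c}" by blast
    then show "j \<in> (\<lambda>t. c + t) ` {t\<in>?E. t \<le> i - 1 - c}" using jj by blast
  next
    fix j assume "j \<in> (\<lambda>t. c + t) ` {t\<in>?E. t \<le> i - 1 - c}"
    then obtain t where t: "j = c + t" "t \<le> i - 1 - c" "u!(c+t) \<noteq> v!(c+t)" by blast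
    have "j < i" using t(1,2) c by linarith
    then show "j \<in> {j. j < i \<and> u!j \<noteq> v!j}" using t by blast
  qed
  have "xor (labA A (take i u)) (labA A (take i v)) = X.F (\<lambda>j. A (i - 1 - j)) ((\<lambda>t. c + t) ` {t\<in>?E. t \<le> i - 1 - c})"
    using labA_xor[of i u v A] len c S by simp
  also have "\<dots> = X.F (\<lambda>t. A (i - 1 - c - t)) {t\<in>?E. t \<le> i - 1 - c}"
    proof -
    have inj: "inj_on (\<lambda>t. c + t) {t\<in>?E. t \<le> i - 1 - c}" by (simp add: inj_on_def)
    show ?thesis unfolding X.reindex[OF inj] comp_def by (simp add: diff_diff_add)
  qed
  also have "\<dots> = Dl A ?E (i - 1 - c)" unfolding Dl_def ..
  finally show ?thesis using xor_eq0_iff by metis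
qed


lemma hamming_eq:
  assumes len: "length u = h" "length v = h" and uv: "u \<noteq> v"
  shows "suffix_hamming (labA A) u v h (h - lca_depth u v) =
    card {k\<in>{..<h - lca_depth u v}. Dl A {t. t < h - lca_depth u v \<and> u!(lca_depth u v+t) \<noteq> v!(lca_depth u v+t)} k \<noteq> 0}"
proof -
  define c where "c = lca_depth u v"
  have P: "c < h" "\<forall>j<c. u!j = v!j" using lca_props[of u v] len uv unfolding c_def by auto
  let ?E = "{t. t < h - c \<and> u!(c+t) \<noteq> v!(c+t)}"
  have hl: "h - (h - c) + 1 = c + 1" using P by simp
  have S: "{i \<in> {c+1..h}. labA A (take i u) \<noteq> labA A (take i v)} =
     (\<lambda>k. c + 1 + k) ` {k\<in>{..<h - c}. Dl A ?E k \<noteq> 0}"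
  proof (rule set_eqI, rule iffI)
    fix i assume i: "i \<in> {i \<in> {c+1..h}. labA A (take i u) \<noteq> labA A (take i v)}"
    then have i1: "c < i" "i \<le> h" and i2: "labA A (take i u) \<noteq> labA A (take i v)" by auto
    have "Dl A ?E (i - 1 - c) \<noteq> 0" using labA_diff[OF len i1 P(2)] i2 by simp
    moreover have "i - 1 - c < h - c" using i1 by linarith
    moreover have "i = c + 1 + (i - 1 - c)" using i1 by linarith
    ultimately show "i \<in> (\<lambda>k. c + 1 + k) ` {k\<in>{..<h - c}. Dl A ?E k \<noteq> 0}" by blast
  next
    fix i assume "i \<in> (\<lambda>k. c + 1 + k) ` {k\<in>{..<h - c}. Dl A ?E k \<noteq> 0}"
    then obtain k where k: "i = c + 1 + k" "k < h - c" "Dl A ?E k \<noteq> 0" by blast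
    have i1: "c < i" "i \<le> h" using k by linarith+
    have "i - 1 - c = k" using k by simp
    then have "labA A (take i u) \<noteq> labA A (take i v)" using labA_diff[OF len i1 P(2)] k by simp
    then show "i \<in> {i \<in> {c+1..h}. labA A (take i u) \<noteq> labA A (take i v)}" using i1 by simp
  qed
  have "suffix_hamming (labA A) u v h (h - c) = card ((\<lambda>k. c + 1 + k) ` {k\<in>{..<h - c}. Dl A ?E k \<noteq> 0})"
    unfolding suffix_hamming_def hl S ..
  also have "\<dots> = card {k\<in>{..<h - c}. Dl A ?E k \<noteq> 0}"
    by (rule card_image) (simp add: inj_on_def)
  finally show ?thesis unfolding c_def .
qed

theorem theorem1:
  fixes n r :: nat
  assumes "n \<ge> 1" and "r \<ge> 4"
  shows "\<exists>lab. valid_labeling r n lab \<and>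
    (\<forall>u v h. length u = h \<and> length v = h \<and> h \<le> n \<and> u \<noteq> v \<longrightarrow>
       (let l = h - lca_depth u v in
          real (suffix_hamming lab u v h l) \<ge> tree_code_bound r l))"
proof -
  obtain cs where cs: "cs \<in> Ls r n"
    and good: "\<forall>l\<in>{2*r+1..n}. \<forall>E. E \<subseteq> {..<l} \<and> 0 \<in> E \<longrightarrow> \<not> (l < 2 * Zc r cs E l)"
    using exists_cs[OF assms(2), of n] by blast
  have csq: "set cs \<subseteq> {..<2^r}" using cs unfolding Ls_def by auto
  let ?A = "Aof r cs"
  have valid: "valid_labeling r n (labA ?A)"
    unfolding valid_labeling_def labA_def by (auto intro!: X_less Aof_less[OF csq])
  have bound: "real (suffix_hamming (labA ?A) u v h (h - lca_depth u v)) \<ge> tree_code_bound r (h - lca_depth u v)"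
    if len: "length u = h" "length v = h" and hn: "h \<le> n" and uv: "u \<noteq> v" for u v h
  proof -
    define c where "c = lca_depth u v"
    define l where "l = h - c"
    have P: "c < h" "u!c \<noteq> v!c" using lca_props[of u v] len uv unfolding c_def by auto
    define E where "E = {t. t < l \<and> u!(c+t) \<noteq> v!(c+t)}"
    have E0: "0 \<in> E" using P unfolding E_def l_def by simp
    have Esub: "E \<subseteq> {..<l}" unfolding E_def by auto
    define N where "N = card {k\<in>{..<l}. Dl ?A E k \<noteq> 0}"
    have HN: "suffix_hamming (labA ?A) u v h (h - lca_depth u v) = N"
      using hamming_eq[OF len uv, of ?A] unfolding N_def E_def l_def c_def by simp
    have hl: "h - lca_depth u v = l" unfolding l_def c_def ..
    have HN2: "suffix_hamming (labA ?A) u v h l = N" using HN unfolding hl .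
    have c1: "min l r \<le> N" unfolding N_def by (rule count_nz(1)[OF E0])
    show ?thesis
    proof (cases "l \<le> 2 * r")
      case True
      then show ?thesis using c1 unfolding hl HN2 tree_code_bound_def
        by auto
    next
      case False
      have ln: "l \<in> {2*r+1..n}" using False hn unfolding l_def by auto
      have nb: "\<not> l < 2 * Zc r cs E l" using good ln E0 Esub by blast
      have "N + Zc r cs E l = l" unfolding N_def by (rule count_nz(2)[OF E0]) (use False in auto)
      then have "real l / 2 \<le> real N" using nb by linarith
      then show ?thesis using False unfolding hl HN2 tree_code_bound_def
        by auto
    qed
  qed
  show ?thesis
    by (rule exI[of _ "labA ?A"]) (use valid bound in \<open>auto simp: Let_def\<close>)
qed

end
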